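(* $\bigcap_{k=0}^{+\infty}\mathbb P_k=\emptyset$, where $\mathbb P_k=\{p^{(k)}_n:n\in\mathbb N\}$.
   Context: Let $p_n$ denote the $n$-th prime number. Define $p^{(0)}_n=n$ and recursively $p^{(k+1)}_n=p_{p^{(k)}_n}$ for $k\in\mathbb N_0$ (so $\mathbb P_0=\mathbb N$, $\mathbb P_1$ is the set of primes). *)

theory Defs
  imports "HOL-Computational_Algebra.Primes" "HOL-Library.Infinite_Set"
begin

text \<open>p_n: the n-th prime, 1-indexed (p_1 = 2). For n = 0 the value is irrelevant.\<close>
definition nth_prime :: "nat \<Rightarrow> nat" where
  "nth_prime n = enumerate {p. prime p} (n - 1)"

definition iter_prime :: "nat \<Rightarrow> nat \<Rightarrow> nat" where
  "iter_prime k n = (nth_prime ^^ k) n"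

definition primeset :: "nat \<Rightarrow> nat set" where
  "primeset k = {iter_prime k n | n. n \<ge> 1}"

end

theory Submission
  imports Defs
begin

lemma enum_ge: "enumerate {p::nat. prime p} i \<ge> i + 2"
proof (induction i)
  case 0
  have "(LEAST n::nat. n \<in> {p. prime p}) = 2"
    by (rule Least_equality) (auto simp: prime_ge_2_nat)
  then show ?case by (simp add: enumerate_0)
next
  case (Suc i)
  have "enumerate {p::nat. prime p} i < enumerate {p. prime p} (Suc i)"
    using enumerate_step[OF primes_infinite] by simp
  then show ?case using Suc by simp
qed

lemma nth_prime_ge: "n \<ge> 1 \<Longrightarrow> nth_prime n \<ge> n + 1"
  unfolding nth_prime_def using enum_ge[of "n - 1"] by simp

lemma iter_ge: "n \<ge> 1 \<Longrightarrow> iter_prime k n \<ge> n + k"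
proof (induction k)
  case 0
  then show ?case by (simp add: iter_prime_def)
next
  case (Suc k)
  have "iter_prime (Suc k) n = nth_prime (iter_prime k n)"
    by (simp add: iter_prime_def)
  moreover have "nth_prime (iter_prime k n) \<ge> iter_prime k n + 1"
    using Suc by (intro nth_prime_ge) simp
  ultimately show ?case using Suc by simp
qed

theorem corollary2:
  shows "(\<Inter>k. primeset k) = {}"
proof (rule ccontr)
  assume "(\<Inter>k. primeset k) \<noteq> {}"
  then obtain m where "\<forall>k. m \<in> primeset k" by blast
  then have "m \<in> primeset m" by blast
  then obtain n where "n \<ge> 1" "m = iter_prime m n" unfolding primeset_def by blast
  with iter_ge[of n m] show False by simp
qed

end
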